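(* Let $\Omega\subset\mathbb{R}^N$ be a bounded domain, let $X=C(\bar{\Omega})$, let $d_I>0$, and let $\gamma$ be a positive continuous function on $\bar{\Omega}$. Let $J:\mathbb{R}^N\to\mathbb{R}$ be continuous with $J(0)>0$, $J(x)=J(-x)\ge 0$, $\int_{\mathbb{R}^N}J(x)\,dx=1$, and $\int_{\Omega}J(x-y)\,dy\not\equiv 1$. Define the bounded linear operator $A:X\to X$ by $$A[u](x)=d_I\left(\int_{\Omega}J(x-y)u(y)\,dy-u(x)\right)-\gamma(x)u(x),\quad x\in\bar\Omega.$$ Then the spectral bound of $A$ is negative: $S(A)<0$.
   Context: For a closed operator $\mathscr{A}$ on $X$ with spectrum $\sigma(\mathscr{A})$, the spectral bound is $S(\mathscr{A})=\sup\{\mathrm{Re}\,\lambda:\lambda\in\sigma(\mathscr{A})\}$. *)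

theory Defs
  imports "HOL-Analysis.Analysis"
begin

text \<open>The space C(closure Omega), complexified; functions are normalised to be 0
  outside the closed set so that elements are canonical representatives.\<close>
definition CX :: "'a::topological_space set \<Rightarrow> ('a \<Rightarrow> complex) set" where
  "CX S = {u. continuous_on S u \<and> (\<forall>x. x \<notin> S \<longrightarrow> u x = 0)}"

definition op_spectrum ::
  "('a \<Rightarrow> complex) set \<Rightarrow> (('a \<Rightarrow> complex) \<Rightarrow> ('a \<Rightarrow> complex)) \<Rightarrow> complex set" where
  "op_spectrum X A = {\<mu>. \<not> bij_betw (\<lambda>u x. \<mu> * u x - A u x) X X}"

text \<open>Spectral bound S(A) = sup of real parts of the spectrum (in ereal, so sup of empty is -infinity).\<close>
definition spectral_bound ::
  "('a \<Rightarrow> complex) set \<Rightarrow> (('a \<Rightarrow> complex) \<Rightarrow> ('a \<Rightarrow> complex)) \<Rightarrow> ereal" where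
  "spectral_bound X A = (SUP \<mu>\<in>op_spectrum X A. ereal (Re \<mu>))"

definition nonlocal_op ::
  "real \<Rightarrow> (real^'n \<Rightarrow> real) \<Rightarrow> (real^'n \<Rightarrow> real) \<Rightarrow> (real^'n) set
     \<Rightarrow> (real^'n \<Rightarrow> complex) \<Rightarrow> (real^'n \<Rightarrow> complex)" where
  "nonlocal_op dI J \<gamma> \<Omega> u x =
     (if x \<in> closure \<Omega> then
        complex_of_real dI * (integral \<Omega> (\<lambda>y. complex_of_real (J (x - y)) * u y) - u x)
        - complex_of_real (\<gamma> x) * u x
      else 0)"

end

theory Submission imports Defs begin

lemma cont_closure_abs_int:
  fixes f :: "real^'n \<Rightarrow> 'b::euclidean_space"
  assumes "open \<Omega>" "bounded \<Omega>" "continuous_on (closure \<Omega>) f"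
  shows "f absolutely_integrable_on \<Omega>"
proof -
  have cpt: "compact (closure \<Omega>)" using assms(2) compact_closure by blast
  then have "bounded (f ` closure \<Omega>)"
    using compact_continuous_image[OF assms(3) cpt] compact_imp_bounded by blast
  then obtain B where B: "\<forall>x\<in>closure \<Omega>. norm (f x) \<le> B"
    by (auto simp: bounded_iff)
  have L: "\<Omega> \<in> sets lebesgue" using assms(1) by simp
  have lm: "\<Omega> \<in> lmeasurable" by (rule bounded_set_imp_lmeasurable[OF assms(2) L])
  show ?thesis
    apply (rule measurable_bounded_by_integrable_imp_absolutely_integrable[where g="\<lambda>_. B"])
    using continuous_imp_measurable_on_sets_lebesgue[OF continuous_on_subset[OF assms(3) closure_subset] L]
      L integrable_on_const[OF lm] B closure_subset by auto
qed

lemma J_int_le1: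
  fixes J :: "real^'n \<Rightarrow> real"
  assumes "open \<Omega>" "bounded \<Omega>" "continuous_on UNIV J" "\<forall>x. J x = J (-x) \<and> J x \<ge> 0"
    "(J has_integral 1) UNIV"
  shows "(\<lambda>y. J (x - y)) integrable_on \<Omega>" and "integral \<Omega> (\<lambda>y. J (x - y)) \<le> 1"
proof -
  have cU: "continuous_on UNIV (\<lambda>y. J (x - y))"
    by (intro continuous_on_compose2[OF assms(3)] continuous_intros) auto
  have c: "continuous_on (closure \<Omega>) (\<lambda>y. J (x - y))"
    using cU continuous_on_subset by blast
  show i: "(\<lambda>y. J(x-y)) integrable_on \<Omega>"
    using cont_closure_abs_int[OF assms(1,2) c] set_lebesgue_integral_eq_integral(1) by blast
  obtain a b where ab: "\<Omega> \<subseteq> cbox a b" using assms(2) bounded_subset_cbox_symmetric by metis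
  have eq: "(\<lambda>y. J(x-y)) = (\<lambda>y. J(y + (-x)))"
  proof
    fix y show "J (x - y) = J (y + - x)" using assms(4) by (metis minus_diff_eq uminus_add_conv_diff add.commute)
  qed
  have "integral \<Omega> (\<lambda>y. J(x-y)) \<le> integral (cbox a b) (\<lambda>y. J(x-y))"
    apply (rule integral_subset_le[OF ab i])
    using integrable_continuous[OF continuous_on_subset[OF cU]] assms(4) by auto
  also have "\<dots> = integral (cbox ((a - x) - (-x)) ((b - x) - (-x))) (\<lambda>y. J(y + (-x)))"
    using eq by simp
  also have "\<dots> = integral (cbox (a - x) (b - x)) J"
    by (rule integral_shift_cbox)
  also have "\<dots> \<le> integral UNIV J"
    apply (rule integral_subset_le)
    using integrable_continuous[OF continuous_on_subset[OF assms(3)]] assms(4,5) by auto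
  also have "\<dots> = 1" using assms(5) by (simp add: integral_unique)
  finally show "integral \<Omega> (\<lambda>y. J (x - y)) \<le> 1" .
qed


definition Kop :: "(real^'n \<Rightarrow> real) \<Rightarrow> (real^'n) set \<Rightarrow> (real^'n \<Rightarrow> complex) \<Rightarrow> real^'n \<Rightarrow> complex" where
  "Kop J \<Omega> u x = integral \<Omega> (\<lambda>y. complex_of_real (J (x - y)) * u y)"

context
  fixes \<Omega> :: "(real^'n) set" and J :: "real^'n \<Rightarrow> real"
  assumes op: "open \<Omega>" and bd: "bounded \<Omega>" and ne: "\<Omega> \<noteq> {}"
    and Jc: "continuous_on UNIV J" and Jsym: "\<forall>x. J x = J (-x) \<and> J x \<ge> 0"
    and J1: "(J has_integral 1) UNIV"
begin

lemma Kint: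
  assumes "continuous_on (closure \<Omega>) u"
  shows "(\<lambda>y. complex_of_real (J (x - y)) * u y) integrable_on \<Omega>"
proof -
  have "continuous_on (closure \<Omega>) (\<lambda>y. complex_of_real (J (x - y)) * u y)"
    apply (intro continuous_intros assms)
    apply (rule continuous_on_compose2[OF Jc]) by (auto intro: continuous_intros)
  then show ?thesis using cont_closure_abs_int[OF op bd] set_lebesgue_integral_eq_integral(1) by blast
qed

lemma Kbound:
  assumes "continuous_on (closure \<Omega>) u" "\<forall>y\<in>closure \<Omega>. norm (u y) \<le> B"
  shows "norm (Kop J \<Omega> u x) \<le> B"
proof -
  obtain y0 where "y0 \<in> \<Omega>" using ne by blast
  then have "norm (u y0) \<le> B" using assms(2) closure_subset by blast
  then have B0: "B \<ge> 0" using norm_ge_zero order_trans by blast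
  have "norm (Kop J \<Omega> u x) \<le> integral \<Omega> (\<lambda>y. B * J (x - y))"
    unfolding Kop_def
  proof (rule integral_norm_bound_integral[OF Kint[OF assms(1)]])
    show "(\<lambda>y. B * J (x - y)) integrable_on \<Omega>"
      using integrable_cmul[OF J_int_le1(1)[OF op bd Jc Jsym J1, of x], of B] by simp
    fix y assume "y \<in> \<Omega>"
    then have "norm (u y) \<le> B" using assms(2) closure_subset by blast
    then show "norm (complex_of_real (J (x - y)) * u y) \<le> B * J (x - y)"
    proof -
      have "norm (complex_of_real (J (x - y)) * u y) = J (x - y) * norm (u y)"
        using Jsym[rule_format, THEN conjunct2, of "x - y"] by (simp add: norm_mult)
      also have "\<dots> \<le> J (x - y) * B" using Jsym[rule_format, THEN conjunct2, of "x - y"] \<open>norm (u y) \<le> B\<close> by (simp add: mult_left_mono)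
      finally show ?thesis by (simp add: mult.commute)
    qed
  qed
  also have "\<dots> = B * integral \<Omega> (\<lambda>y. J (x - y))" by simp
  also have "\<dots> \<le> B * 1" using J_int_le1(2)[OF op bd Jc Jsym J1] B0 by (intro mult_left_mono) auto
  finally show ?thesis by simp
qed

lemma Kdiff:
  assumes "continuous_on (closure \<Omega>) u" "continuous_on (closure \<Omega>) v"
  shows "Kop J \<Omega> (\<lambda>y. u y - v y) x = Kop J \<Omega> u x - Kop J \<Omega> v x"
  unfolding Kop_def using integral_diff[OF Kint[OF assms(1)] Kint[OF assms(2)]]
  by (simp add: algebra_simps)


lemma Kcont:
  assumes uc: "continuous_on (closure \<Omega>) u"
  shows "continuous_on (closure \<Omega>) (Kop J \<Omega> u)"
proof -
  define S where "S = closure \<Omega>"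
  have cpt: "compact S" using bd compact_closure S_def by blast
  then have "bounded (u ` S)"
    using compact_continuous_image[OF uc[folded S_def] cpt] compact_imp_bounded by blast
  then obtain B0 where B0: "\<forall>x\<in>S. norm (u x) \<le> B0"
    by (auto simp: bounded_iff)
  define B where "B = max B0 1"
  have B: "\<forall>x\<in>S. norm (u x) \<le> B" and Bpos: "B > 0" using B0 by (auto simp: B_def intro: order_trans)
  obtain r where r: "\<forall>x\<in>S. norm x \<le> r" using compact_imp_bounded[OF cpt] by (auto simp: bounded_iff)
  define C where "C = cball (0::real^'n) (2*r)"
  have ucJ: "uniformly_continuous_on C J"
    using compact_uniformly_continuous[OF continuous_on_subset[OF Jc] compact_cball] C_def by blast
  define V where "V = integral \<Omega> (\<lambda>_. 1::real)"
  have int1: "(\<lambda>_. 1::real) integrable_on \<Omega>"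
    by (rule integrable_on_const[OF bounded_set_imp_lmeasurable[OF bd]]) (use op in simp)
  have V0: "V \<ge> 0" unfolding V_def by (rule integral_nonneg[OF int1]) auto
  show ?thesis
    unfolding continuous_on_iff S_def[symmetric]
  proof (intro ballI allI impI)
    fix x e assume xS: "x \<in> S" and e: "(0::real) < e"
    define \<epsilon> where "\<epsilon> = e / (2 * (B * V + 1))"
    have \<epsilon>: "\<epsilon> > 0" unfolding \<epsilon>_def using e Bpos V0 by (simp add: add_nonneg_pos)
    obtain d where d: "d > 0" "\<forall>z\<in>C. \<forall>z'\<in>C. dist z' z < d \<longrightarrow> dist (J z') (J z) < \<epsilon>"
      using ucJ \<epsilon> unfolding uniformly_continuous_on_def by metis
    show "\<exists>d>0. \<forall>x'\<in>S. dist x' x < d \<longrightarrow> dist (Kop J \<Omega> u x') (Kop J \<Omega> u x) < e"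
    proof (intro exI conjI ballI impI)
      show "d > 0" by fact
      fix x' assume x'S: "x' \<in> S" and dx: "dist x' x < d"
      have "Kop J \<Omega> u x' - Kop J \<Omega> u x = integral \<Omega> (\<lambda>y. complex_of_real (J (x' - y) - J (x - y)) * u y)"
        unfolding Kop_def using integral_diff[OF Kint[OF uc] Kint[OF uc]]
        by (simp add: algebra_simps)
      then have "dist (Kop J \<Omega> u x') (Kop J \<Omega> u x) = norm (integral \<Omega> (\<lambda>y. complex_of_real (J (x' - y) - J (x - y)) * u y))"
        by (simp add: dist_norm)
      also have "\<dots> \<le> integral \<Omega> (\<lambda>y. (\<epsilon> * B) * 1)"
      proof (rule integral_norm_bound_integral)
        have "continuous_on (closure \<Omega>) (\<lambda>y. complex_of_real (J (x' - y) - J (x - y)) * u y)"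
          apply (intro continuous_intros uc)
          by (rule continuous_on_compose2[OF Jc]; auto intro: continuous_intros)+
        then show "(\<lambda>y. complex_of_real (J (x' - y) - J (x - y)) * u y) integrable_on \<Omega>"
          using cont_closure_abs_int[OF op bd] set_lebesgue_integral_eq_integral(1) by blast
        show "(\<lambda>y. \<epsilon> * B * 1) integrable_on \<Omega>"
          by (rule integrable_on_const[OF bounded_set_imp_lmeasurable[OF bd]]) (use op in simp)
        fix y assume yO: "y \<in> \<Omega>"
        then have yS: "y \<in> S" using closure_subset S_def by blast
        have "x' - y \<in> C" "x - y \<in> C" unfolding C_def using r xS x'S yS
          by (auto simp: dist_norm intro!: order_trans[OF norm_triangle_ineq4]
              add_mono[of _ r _ r, simplified mult_2[symmetric]])
        moreover have "dist (x' - y) (x - y) < d" using dx by (simp add: dist_norm)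
        ultimately have "dist (J (x' - y)) (J (x - y)) < \<epsilon>" using d(2) by blast
        then have "\<bar>J (x' - y) - J (x - y)\<bar> \<le> \<epsilon>" by (simp add: dist_real_def)
        moreover have "norm (u y) \<le> B" using B yS by blast
        ultimately have "\<bar>J (x' - y) - J (x - y)\<bar> * norm (u y) \<le> \<epsilon> * B"
          by (intro mult_mono) auto
        then show "norm (complex_of_real (J (x' - y) - J (x - y)) * u y) \<le> \<epsilon> * B * 1"
          by (simp add: norm_mult of_real_diff[symmetric] del: of_real_diff)
      qed
      also have "\<dots> = \<epsilon> * B * V" unfolding V_def by (simp only: integral_mult_right)
      also have "\<dots> < e"
      proof -
        have "\<epsilon> * (B * V) \<le> \<epsilon> * (B * V + 1)" using \<epsilon> by simp
        also have "\<dots> = e / 2"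
        proof -
          have pos: "B * V + 1 > 0" using Bpos V0 by (simp add: add_nonneg_pos)
          then show ?thesis unfolding \<epsilon>_def by (simp add: field_simps)
        qed
        finally show ?thesis using e by (simp add: mult.assoc)
      qed
      finally show "dist (Kop J \<Omega> u x') (Kop J \<Omega> u x) < e" .
    qed
  qed
qed


lemma Lform:
  assumes "u \<in> CX (closure \<Omega>)"
  shows "(\<lambda>x. \<mu> * u x - nonlocal_op dI J \<gamma> \<Omega> u x) =
    (\<lambda>x. if x \<in> closure \<Omega> then (\<mu> + complex_of_real dI + complex_of_real (\<gamma> x)) * u x
           - complex_of_real dI * Kop J \<Omega> u x else 0)"
  using assms unfolding CX_def nonlocal_op_def Kop_def
  by (auto simp: algebra_simps)

lemma bij_L:
  fixes dI a :: real and \<gamma> :: "real^'n \<Rightarrow> real" and \<mu> :: complex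
  assumes dI: "dI > 0" and \<gamma>c: "continuous_on (closure \<Omega>) \<gamma>" and a: "a > dI"
    and ca: "\<forall>x\<in>closure \<Omega>. a \<le> norm (\<mu> + complex_of_real dI + complex_of_real (\<gamma> x))"
  shows "bij_betw (\<lambda>u x. \<mu> * u x - nonlocal_op dI J \<gamma> \<Omega> u x) (CX (closure \<Omega>)) (CX (closure \<Omega>))"
proof -
  define S where "S = closure \<Omega>"
  define c where "c = (\<lambda>x. \<mu> + complex_of_real dI + complex_of_real (\<gamma> x))"
  define L where "L = (\<lambda>u x. if x \<in> S then c x * u x - complex_of_real dI * Kop J \<Omega> u x else 0)"
  have X: "u \<in> CX S \<longleftrightarrow> continuous_on S u \<and> (\<forall>x. x \<notin> S \<longrightarrow> u x = 0)" for u
    by (simp add: CX_def)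
  have cpt: "compact S" using bd compact_closure S_def by blast
  have Sne: "S \<noteq> {}" using ne S_def closure_subset by blast
  have cc: "continuous_on S c" unfolding c_def S_def
    by (intro continuous_intros \<gamma>c)
  have ca': "\<forall>x\<in>S. a \<le> norm (c x)" using ca S_def c_def by simp
  have a0: "a > 0" using a dI by simp
  have cnz: "\<forall>x\<in>S. c x \<noteq> 0" using ca' a0 by force
  have Leq: "(\<lambda>x. \<mu> * u x - nonlocal_op dI J \<gamma> \<Omega> u x) = L u" if "u \<in> CX S" for u
    using Lform[of u \<mu> dI \<gamma>] that unfolding L_def c_def S_def by simp
  have KX: "continuous_on S (Kop J \<Omega> u)" if "u \<in> CX S" for u
    using Kcont that X S_def by blast
  have LX: "L u \<in> CX S" if "u \<in> CX S" for u
  proof -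
    have "continuous_on S (\<lambda>x. c x * u x - complex_of_real dI * Kop J \<Omega> u x)"
      using that X KX cc by (intro continuous_intros) auto
    then have "continuous_on S (L u)" unfolding L_def
      by (rule continuous_on_eq) auto
    then show ?thesis unfolding X L_def by auto
  qed
  have inj: "inj_on L (CX S)"
  proof (rule inj_onI)
    fix u v assume uX: "u \<in> CX S" and vX: "v \<in> CX S" and Luv: "L u = L v"
    define w where "w = (\<lambda>x. u x - v x)"
    have wc: "continuous_on S w" unfolding w_def using uX vX X by (intro continuous_intros) auto
    have Kw: "Kop J \<Omega> w x = Kop J \<Omega> u x - Kop J \<Omega> v x" for x
      unfolding w_def using Kdiff uX vX X S_def by blast
    have weq: "c x * w x = complex_of_real dI * Kop J \<Omega> w x" if "x \<in> S" for x
    proof -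
      have "L u x = L v x" using Luv by simp
      moreover have "w x = u x - v x" unfolding w_def by simp
      moreover have "c x * u x - complex_of_real dI * Kop J \<Omega> u x = c x * v x - complex_of_real dI * Kop J \<Omega> v x"
        using \<open>L u x = L v x\<close> that unfolding L_def by simp
      ultimately have e1: "c x * u x - c x * v x = complex_of_real dI * Kop J \<Omega> u x - complex_of_real dI * Kop J \<Omega> v x"
        and wx: "w x = u x - v x" by (simp_all add: algebra_simps)
      have "c x * w x = c x * u x - c x * v x" using wx by (simp add: right_diff_distrib)
      also have "\<dots> = complex_of_real dI * (Kop J \<Omega> u x - Kop J \<Omega> v x)" using e1 by (simp add: right_diff_distrib)
      finally show ?thesis using Kw[of x] by simp
    qed
    obtain x0 where x0: "x0 \<in> S" "\<forall>y\<in>S. norm (w y) \<le> norm (w x0)"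
      using continuous_attains_sup[OF cpt Sne continuous_on_norm[OF wc]] by blast
    have "norm (Kop J \<Omega> w x0) \<le> norm (w x0)"
      using Kbound[of w "norm (w x0)" x0] wc x0 S_def by blast
    then have "norm (c x0) * norm (w x0) \<le> dI * norm (w x0)"
    proof -
      have "norm (c x0) * norm (w x0) = dI * norm (Kop J \<Omega> w x0)"
        using weq[OF x0(1)] dI by (metis norm_mult norm_of_real abs_of_pos)
      also have "\<dots> \<le> dI * norm (w x0)" using \<open>norm (Kop J \<Omega> w x0) \<le> norm (w x0)\<close> dI
        by (simp add: mult_left_mono)
      finally show ?thesis .
    qed
    moreover have "a * norm (w x0) \<le> norm (c x0) * norm (w x0)"
      using ca' x0(1) by (simp add: mult_right_mono)
    ultimately have "a * norm (w x0) \<le> dI * norm (w x0)" by linarith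
    then have "(a - dI) * norm (w x0) \<le> 0" by (simp add: algebra_simps)
    then have "norm (w x0) \<le> 0" using a by (auto simp add: mult_le_0_iff)
    then have wz: "\<forall>y\<in>S. w y = 0" using x0 by (metis norm_le_zero_iff order_trans)
    show "u = v"
    proof
      fix y show "u y = v y"
      proof (cases "y \<in> S")
        case True then show ?thesis using wz unfolding w_def by simp
      next
        case False then show ?thesis using uX vX X by simp
      qed
    qed
  qed
  have surj: "f \<in> L ` CX S" if fX: "f \<in> CX S" for f
  proof -
    define T where "T = (\<lambda>u x. if x \<in> S then (f x + complex_of_real dI * Kop J \<Omega> u x) / c x else 0)"
    have TX: "T u \<in> CX S" if "u \<in> CX S" for u
    proof -
      have "continuous_on S (\<lambda>x. (f x + complex_of_real dI * Kop J \<Omega> u x) / c x)"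
        using that fX X KX cc cnz by (intro continuous_intros) auto
      then have "continuous_on S (T u)" unfolding T_def
        by (rule continuous_on_eq) auto
      then show ?thesis unfolding X T_def by auto
    qed
    define q where "q = dI / a"
    have q: "0 \<le> q" "q < 1" unfolding q_def using dI a by auto
    have contr: "norm (T u x - T v x) \<le> q * B"
      if "u \<in> CX S" "v \<in> CX S" "\<forall>y\<in>S. norm (u y - v y) \<le> B" "x \<in> S" for u v B x
    proof -
      have uvc: "continuous_on S (\<lambda>y. u y - v y)" using that X by (intro continuous_intros) auto
      have Kb: "norm (Kop J \<Omega> (\<lambda>y. u y - v y) x) \<le> B"
        using Kbound[of "\<lambda>y. u y - v y" B x] uvc that(3) S_def by blast
      have "T u x - T v x = ((f x + complex_of_real dI * Kop J \<Omega> u x) - (f x + complex_of_real dI * Kop J \<Omega> v x)) / c x"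
        using that(4) unfolding T_def by (simp add: diff_divide_distrib[symmetric])
      also have "\<dots> = complex_of_real dI * (Kop J \<Omega> u x - Kop J \<Omega> v x) / c x"
        by (simp add: algebra_simps)
      also have "\<dots> = complex_of_real dI * Kop J \<Omega> (\<lambda>y. u y - v y) x / c x"
        using Kdiff[of u v x] that(1,2) X S_def by simp
      finally have "T u x - T v x = complex_of_real dI * Kop J \<Omega> (\<lambda>y. u y - v y) x / c x" .
      then have "norm (T u x - T v x) = dI * norm (Kop J \<Omega> (\<lambda>y. u y - v y) x) / norm (c x)"
        using dI by (simp add: norm_mult norm_divide)
      also have "\<dots> \<le> dI * B / a"
      proof -
        have B0: "0 \<le> B" using Kb norm_ge_zero order_trans by blast
        have "dI * norm (Kop J \<Omega> (\<lambda>y. u y - v y) x) / norm (c x) \<le> dI * B / norm (c x)"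
          using Kb dI by (intro divide_right_mono mult_left_mono) auto
        also have "\<dots> \<le> dI * B / a"
        proof (rule divide_left_mono)
          show "a \<le> norm (c x)" using ca' that(4) by blast
          then show "0 < norm (c x) * a" using a0 by (intro mult_pos_pos) auto
        qed (use B0 dI in simp)
        finally show ?thesis .
      qed
      also have "\<dots> = q * B" unfolding q_def by simp
      finally show ?thesis .
    qed
    define U where "U = (\<lambda>k. (T ^^ k) (\<lambda>_. 0))"
    have U0: "U 0 = (\<lambda>_. 0)" and USuc: "U (Suc k) = T (U k)" for k unfolding U_def by simp_all
    have UX: "U k \<in> CX S" for k
    proof (induction k)
      case 0 then show ?case by (simp add: U0 X)
    next
      case (Suc k) then show ?case unfolding USuc by (rule TX)
    qed
    have "continuous_on S (\<lambda>x. U 1 x - U 0 x)" using UX X by (intro continuous_intros) auto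
    then have "bounded ((\<lambda>x. U 1 x - U 0 x) ` S)"
      using compact_continuous_image[OF _ cpt] compact_imp_bounded by blast
    then obtain C0 where C0: "\<forall>x\<in>S. norm (U 1 x - U 0 x) \<le> C0" by (auto simp: bounded_iff)
    define C where "C = max C0 0"
    have C: "\<forall>x\<in>S. norm (U 1 x - U 0 x) \<le> C" "C \<ge> 0"
      using C0 unfolding C_def by (auto intro: order_trans)
    have step: "\<forall>x\<in>S. norm (U (Suc k) x - U k x) \<le> C * q ^ k" for k
    proof (induction k)
      case 0 then show ?case using C by simp
    next
      case (Suc k)
      show ?case
      proof
        fix x assume "x \<in> S"
        have "norm (T (U (Suc k)) x - T (U k) x) \<le> q * (C * q ^ k)"
          by (rule contr[OF UX UX Suc \<open>x \<in> S\<close>])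
        then show "norm (U (Suc (Suc k)) x - U (Suc k) x) \<le> C * q ^ Suc k"
          by (simp add: USuc[of "Suc k"] USuc[of k] algebra_simps)
      qed
    qed
    define D where "D = (\<lambda>i x. U (Suc i) x - U i x)"
    have tele: "(\<Sum>i<n. D i x) = U n x" for n x
      unfolding D_def using sum_lessThan_telescope[of "\<lambda>i. U i x" n] U0 by simp
    define u where "u = (\<lambda>x. \<Sum>i. D i x)"
    have "uniform_limit S (\<lambda>n x. \<Sum>i<n. D i x) u sequentially"
      unfolding u_def
      by (rule Weierstrass_m_test[where M="\<lambda>i. C * q ^ i"])
         (use step D_def q in \<open>auto intro!: summable_mult summable_geometric\<close>)
    then have ul: "uniform_limit S U u sequentially" using tele by (simp add: fun_eq_iff)
    have ucont: "continuous_on S u"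
      by (rule uniform_limit_theorem[OF _ ul]) (auto simp: UX[unfolded X])
    have uout: "u x = 0" if "x \<notin> S" for x
      using UX X that unfolding u_def D_def by simp
    have uX: "u \<in> CX S" using ucont uout X by blast
    have fix_u: "c x * u x - complex_of_real dI * Kop J \<Omega> u x = f x" if xS: "x \<in> S" for x
    proof -
      have l1: "(\<lambda>n. U (Suc n) x) \<longlonglongrightarrow> u x"
        using tendsto_uniform_limitI[OF ul xS] LIMSEQ_Suc by blast
      have l2: "(\<lambda>n. Kop J \<Omega> (U n) x) \<longlonglongrightarrow> Kop J \<Omega> u x"
      proof (rule tendstoI)
        fix e :: real assume e: "e > 0"
        have ev: "\<forall>\<^sub>F n in sequentially. \<forall>y\<in>S. dist (U n y) (u y) < e / 2"
          using uniform_limitD[OF ul, of "e/2"] e by simp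
        show "\<forall>\<^sub>F n in sequentially. dist (Kop J \<Omega> (U n) x) (Kop J \<Omega> u x) < e"
        proof (rule eventually_mono[OF ev])
          fix n assume H: "\<forall>y\<in>S. dist (U n y) (u y) < e / 2"
          have cn: "continuous_on S (\<lambda>y. U n y - u y)" using UX uX X by (intro continuous_intros) auto
          have "norm (Kop J \<Omega> (\<lambda>y. U n y - u y) x) \<le> e / 2"
            using Kbound[of "\<lambda>y. U n y - u y" "e/2" x] cn H S_def
            by (simp add: dist_norm less_imp_le)
          moreover have "Kop J \<Omega> (\<lambda>y. U n y - u y) x = Kop J \<Omega> (U n) x - Kop J \<Omega> u x"
            using Kdiff[of "U n" u x] UX uX X S_def by blast
          ultimately show "dist (Kop J \<Omega> (U n) x) (Kop J \<Omega> u x) < e"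
            using e by (simp add: dist_norm)
        qed
      qed
      have "(\<lambda>n. U (Suc n) x) \<longlonglongrightarrow> (f x + complex_of_real dI * Kop J \<Omega> u x) / c x"
      proof -
        have "(\<lambda>n. U (Suc n) x) = (\<lambda>n. (f x + complex_of_real dI * Kop J \<Omega> (U n) x) / c x)"
          using xS by (simp add: USuc T_def)
        moreover have "(\<lambda>n. (f x + complex_of_real dI * Kop J \<Omega> (U n) x) / c x)
           \<longlonglongrightarrow> (f x + complex_of_real dI * Kop J \<Omega> u x) / c x"
          by (intro tendsto_divide tendsto_add tendsto_mult tendsto_const l2) (use cnz xS in auto)
        ultimately show ?thesis by simp
      qed
      then have "u x = (f x + complex_of_real dI * Kop J \<Omega> u x) / c x"
        using l1 LIMSEQ_unique by blast
      then show ?thesis using cnz xS by (simp add: field_simps)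
    qed
    have "L u = f"
    proof
      fix x show "L u x = f x"
        using fix_u fX X unfolding L_def by auto
    qed
    then show ?thesis using uX by blast
  qed
  have img: "L ` CX S = CX S" using LX surj by blast
  have "bij_betw L (CX S) (CX S)" using inj img by (simp add: bij_betw_def)
  moreover have "bij_betw (\<lambda>u x. \<mu> * u x - nonlocal_op dI J \<gamma> \<Omega> u x) (CX S) (CX S) = bij_betw L (CX S) (CX S)"
    by (rule bij_betw_cong) (use Leq in auto)
  ultimately show ?thesis using S_def by simp
qed

end

theorem proposition2p4:
  fixes \<Omega> :: "(real^'n) set" and J :: "real^'n \<Rightarrow> real" and \<gamma> :: "real^'n \<Rightarrow> real"
    and dI :: real
  assumes "open \<Omega>" and "connected \<Omega>" and "\<Omega> \<noteq> {}" and "bounded \<Omega>"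
    and "dI > 0"
    and "continuous_on (closure \<Omega>) \<gamma>" and "\<forall>x\<in>closure \<Omega>. \<gamma> x > 0"
    and "continuous_on UNIV J" and "J 0 > 0"
    and "\<forall>x. J x = J (- x) \<and> J x \<ge> 0"
    and "(J has_integral 1) UNIV"
    and "\<exists>x\<in>closure \<Omega>. integral \<Omega> (\<lambda>y. J (x - y)) \<noteq> 1"
  shows "spectral_bound (CX (closure \<Omega>)) (nonlocal_op dI J \<gamma> \<Omega>) < 0"
proof -
  have cpt: "compact (closure \<Omega>)" using assms(4) compact_closure by blast
  have Sne: "closure \<Omega> \<noteq> {}" using assms(3) closure_subset by blast
  obtain x0 where x0: "x0 \<in> closure \<Omega>" "\<forall>y\<in>closure \<Omega>. \<gamma> x0 \<le> \<gamma> y"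
    using continuous_attains_inf[OF cpt Sne assms(6)] by blast
  define g0 where "g0 = \<gamma> x0"
  have g0: "g0 > 0" using assms(7) x0 g0_def by blast
  have sp: "Re \<mu> \<le> - g0" if "\<mu> \<in> op_spectrum (CX (closure \<Omega>)) (nonlocal_op dI J \<gamma> \<Omega>)" for \<mu>
  proof (rule ccontr)
    assume "\<not> Re \<mu> \<le> - g0"
    then have R: "Re \<mu> > - g0" by simp
    define a where "a = Re \<mu> + dI + g0"
    have a: "a > dI" using R a_def by simp
    have ca: "\<forall>x\<in>closure \<Omega>. a \<le> norm (\<mu> + complex_of_real dI + complex_of_real (\<gamma> x))"
    proof
      fix x assume "x \<in> closure \<Omega>"
      then have "g0 \<le> \<gamma> x" using x0 g0_def by blast
      then have "a \<le> Re (\<mu> + complex_of_real dI + complex_of_real (\<gamma> x))" unfolding a_def by simp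
      also have "\<dots> \<le> norm (\<mu> + complex_of_real dI + complex_of_real (\<gamma> x))" by (rule complex_Re_le_cmod)
      finally show "a \<le> norm (\<mu> + complex_of_real dI + complex_of_real (\<gamma> x))" .
    qed
    have "bij_betw (\<lambda>u x. \<mu> * u x - nonlocal_op dI J \<gamma> \<Omega> u x) (CX (closure \<Omega>)) (CX (closure \<Omega>))"
      by (rule bij_L[OF assms(1,4,3,8,10,11,5,6) a ca])
    then show False using that unfolding op_spectrum_def by simp
  qed
  have "spectral_bound (CX (closure \<Omega>)) (nonlocal_op dI J \<gamma> \<Omega>) \<le> ereal (- g0)"
    unfolding spectral_bound_def using sp by (auto intro!: SUP_least)
  also have "\<dots> < 0" using g0 by simp
  finally show ?thesis .
qed

end
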